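(* Consider Algorithm MWHVC (described in the context) run in the CONGEST model on a hypergraph $G=(V,E)$ of rank $f$ and maximum degree $\Delta\ge 3$ with nonnegative vertex weights $w$, with parameters $\varepsilon\in(0,1]$, $\beta=\varepsilon/(f+\varepsilon)$ and multiplier $\alpha=\log\Delta/\log\log\Delta$. Then the round complexity of the algorithm is $O\left(\frac{f^2}{\varepsilon}\cdot\frac{\log\Delta}{\log\log\Delta}\right)$.
   Context: Let $G=(V,E)$ be a hypergraph with $n=|V|$: each hyperedge is a nonempty subset of $V$ of size at most $f$ (rank $f$). Vertices have nonnegative weights $w(v)$; weights and degrees are assumed polynomial in $n$. For $v\in V$, $E(v)=\{e\in E: v\in e\}$; $\Delta=\max_v |E(v)|\ge 3$. A hyperedge $e$ is covered by $C\subseteq V$ if $e\cap C\neq\emptyset$. The computation is distributed in synchronous rounds (CONGEST: messages of $O(\log n)$ bits) on the bipartite network with node set $V\cup E$ and a link between $v$ and $e$ iff $v\in e$. Parameters: $\varepsilon\in(0,1]$, $\beta=\varepsilon/(f+\varepsilon)$, and a multiplier $\alpha>1$. Algorithm MWHVC: Initialize $C\gets\emptyset$ and $E'(v)\gets E(v)$ for every $v$. Iteration $0$: every hyperedge $e$ sets $\mathrm{deal}_0(e)=\beta\cdot\min_{v\in e} w(v)/|E(v)|$ and $\delta_0(e)=\mathrm{deal}_0(e)$. For $i=1,2,\dots$: (a) every vertex $v\notin C$ (not terminated) checks whether $\sum_{e\in E(v)}\delta_{i-1}(e)\ge(1-\beta)w(v)$; if so, $v$ joins $C$, tells every $e\in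 E'(v)$ that $e$ is covered, and terminates. (b) Every uncovered hyperedge that receives such a message becomes covered, informs all its vertices, and terminates. (c) Every vertex $v\notin C$ that is told $e$ is covered sets $E'(v)\gets E'(v)\setminus\{e\}$; if $E'(v)=\emptyset$, $v$ terminates without joining $C$. (d) Every vertex $v\notin C$ sends "raise" to all $e\in E'(v)$ if $\sum_{e\in E'(v)}\mathrm{deal}_{i-1}(e)\le(\beta/\alpha)w(v)$, and otherwise sends "stuck" to all $e\in E'(v)$. (e) Every uncovered hyperedge $e$ sets $\mathrm{deal}_i(e)=\mathrm{deal}_{i-1}(e)$ if it received some "stuck" message, and $\mathrm{deal}_i(e)=\alpha\cdot\mathrm{deal}_{i-1}(e)$ otherwise, and $\delta_i(e)=\delta_{i-1}(e)+\mathrm{deal}_i(e)$, sending the new deal to its vertices. A vertex terminates when it is in $C$ or all its hyperedges are covered; a hyperedge terminates when covered. *)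

theory Defs
  imports Complex_Main
begin

definition inc_edges :: "nat set set \<Rightarrow> nat \<Rightarrow> nat set set" where
  "inc_edges E v = {e \<in> E. v \<in> e}"

definition max_degree :: "nat set \<Rightarrow> nat set set \<Rightarrow> nat" where
  "max_degree V E = Max ((\<lambda>v. card (inc_edges E v)) ` V)"

text \<open>Global state after an iteration:
  (C, covered hyperedges, deal, delta). For a non-joined vertex v, the set
  E'(v) equals the set of incident hyperedges that are not yet covered.\<close>

type_synonym mwhvc_state =
  "nat set \<times> nat set set \<times> (nat set \<Rightarrow> real) \<times> (nat set \<Rightarrow> real)"

definition mwhvc_init ::
  "nat set set \<Rightarrow> (nat \<Rightarrow> real) \<Rightarrow> real \<Rightarrow> mwhvc_state" where
  "mwhvc_init E w \<beta> =
     (let d = (\<lambda>e. if e \<in> E then \<beta> * Min ((\<lambda>v. w v / real (card (inc_edges E v))) ` e) else 0)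
      in ({}, {}, d, d))"

text \<open>One iteration i \<ge> 1, steps (a)--(e).  A vertex is not terminated iff it is not in C
  and some incident hyperedge is uncovered.\<close>

definition mwhvc_step ::
  "nat set \<Rightarrow> nat set set \<Rightarrow> (nat \<Rightarrow> real) \<Rightarrow> real \<Rightarrow> real \<Rightarrow> mwhvc_state \<Rightarrow> mwhvc_state" where
  "mwhvc_step V E w \<beta> \<alpha> st =
     (case st of (C, Cov, deal, delta) \<Rightarrow>
       let J = {v \<in> V. v \<notin> C \<and> inc_edges E v - Cov \<noteq> {} \<and>
                        (\<Sum>e\<in>inc_edges E v. delta e) \<ge> (1 - \<beta>) * w v};
           C' = C \<union> J;
           Cov' = Cov \<union> {e \<in> E. e \<inter> J \<noteq> {}};
           stuck = (\<lambda>v. v \<notin> C' \<and> inc_edges E v - Cov' \<noteq> {} \<and>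
                        (\<Sum>e\<in>inc_edges E v - Cov'. deal e) > (\<beta> / \<alpha>) * w v);
           deal' = (\<lambda>e. if e \<in> E - Cov' then
                          (if (\<exists>v\<in>e. stuck v) then deal e else \<alpha> * deal e)
                        else deal e);
           delta' = (\<lambda>e. if e \<in> E - Cov' then delta e + deal' e else delta e)
       in (C', Cov', deal', delta'))"

definition mwhvc_state_at ::
  "nat set \<Rightarrow> nat set set \<Rightarrow> (nat \<Rightarrow> real) \<Rightarrow> real \<Rightarrow> real \<Rightarrow> nat \<Rightarrow> mwhvc_state" where
  "mwhvc_state_at V E w \<beta> \<alpha> i = (mwhvc_step V E w \<beta> \<alpha> ^^ i) (mwhvc_init E w \<beta>)"

text \<open>All nodes (vertices and hyperedges) have terminated after iteration i iff every
  hyperedge is covered.\<close>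

definition mwhvc_done_by ::
  "nat set \<Rightarrow> nat set set \<Rightarrow> (nat \<Rightarrow> real) \<Rightarrow> real \<Rightarrow> real \<Rightarrow> nat \<Rightarrow> bool" where
  "mwhvc_done_by V E w \<beta> \<alpha> i = (fst (snd (mwhvc_state_at V E w \<beta> \<alpha> i)) = E)"

end

theory Submission
  imports Defs "HOL-Analysis.Complex_Transcendental"
begin

context
  fixes V :: "nat set" and E :: "nat set set" and w :: "nat \<Rightarrow> real" and \<beta> \<alpha> :: real
  assumes finV: "finite V" and edges: "\<forall>e\<in>E. e \<noteq> {} \<and> e \<subseteq> V"
    and wnn: "\<forall>v\<in>V. w v \<ge> 0" and bpos: "0 < \<beta>" and blt: "\<beta> < 1" and agt: "1 < \<alpha>"
begin

definition Cs where "Cs i = fst (mwhvc_state_at V E w \<beta> \<alpha> i)"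
definition Cv where "Cv i = fst (snd (mwhvc_state_at V E w \<beta> \<alpha> i))"
definition dl where "dl i = fst (snd (snd (mwhvc_state_at V E w \<beta> \<alpha> i)))"
definition dt where "dt i = snd (snd (snd (mwhvc_state_at V E w \<beta> \<alpha> i)))"
definition JJ where "JJ i = {v \<in> V. v \<notin> Cs i \<and> inc_edges E v - Cv i \<noteq> {} \<and>
                        (\<Sum>e\<in>inc_edges E v. dt i e) \<ge> (1 - \<beta>) * w v}"
definition stk where "stk i v = (v \<notin> Cs (Suc i) \<and> inc_edges E v - Cv (Suc i) \<noteq> {} \<and>
                        (\<Sum>e\<in>inc_edges E v - Cv (Suc i). dl i e) > (\<beta> / \<alpha>) * w v)"
definition DD where "DD i v = (\<Sum>x\<in>inc_edges E v. dt i x)"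

lemma state_eq: "mwhvc_state_at V E w \<beta> \<alpha> i = (Cs i, Cv i, dl i, dt i)"
  by (simp add: Cs_def Cv_def dl_def dt_def)

lemma state_Suc: "mwhvc_state_at V E w \<beta> \<alpha> (Suc i) = mwhvc_step V E w \<beta> \<alpha> (Cs i, Cv i, dl i, dt i)"
  by (simp add: mwhvc_state_at_def state_eq[symmetric])

lemma Cs_Suc: "Cs (Suc i) = Cs i \<union> JJ i"
  unfolding Cs_def[of "Suc i"] state_Suc by (simp add: mwhvc_step_def Let_def JJ_def)

lemma Cv_Suc: "Cv (Suc i) = Cv i \<union> {e\<in>E. e \<inter> JJ i \<noteq> {}}"
  unfolding Cv_def[of "Suc i"] state_Suc by (simp add: mwhvc_step_def Let_def JJ_def)

lemma dl_Suc: "dl (Suc i) e = (if e \<in> E - Cv (Suc i) then (if \<exists>v\<in>e. stk i v then dl i e else \<alpha> * dl i e) else dl i e)"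
  unfolding dl_def[of "Suc i"] state_Suc stk_def Cs_Suc Cv_Suc
  by (simp add: mwhvc_step_def Let_def JJ_def)

lemma dt_Suc: "dt (Suc i) e = (if e \<in> E - Cv (Suc i) then dt i e + dl (Suc i) e else dt i e)"
  unfolding dt_def[of "Suc i"] dl_Suc state_Suc stk_def Cs_Suc Cv_Suc
  by (simp add: mwhvc_step_def Let_def JJ_def)

lemma init: "Cs 0 = {}" "Cv 0 = {}"
  "dl 0 e = (if e \<in> E then \<beta> * Min ((\<lambda>v. w v / real (card (inc_edges E v))) ` e) else 0)"
  "dt 0 e = dl 0 e"
  by (simp_all add: Cs_def Cv_def dl_def dt_def mwhvc_state_at_def mwhvc_init_def Let_def)

lemma finE: "finite E"
proof -
  have "E \<subseteq> Pow V" using edges by auto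
  thus ?thesis using finV finite_subset by blast
qed

lemma fin_inc: "finite (inc_edges E v)"
  using finE by (simp add: inc_edges_def)

lemma fin_edge: "e \<in> E \<Longrightarrow> finite e"
  using edges finV finite_subset by blast

lemma card_inc_pos: "e \<in> E \<Longrightarrow> v \<in> e \<Longrightarrow> card (inc_edges E v) \<ge> 1"
proof -
  assume "e \<in> E" "v \<in> e"
  hence "e \<in> inc_edges E v" by (simp add: inc_edges_def)
  thus ?thesis using fin_inc[of v]
    by (metis One_nat_def Suc_leI card_gt_0_iff empty_iff)
qed

lemma inv: "Cv i \<subseteq> E \<and> (\<forall>x\<in>E. x \<inter> Cs i \<noteq> {} \<longrightarrow> x \<in> Cv i) \<and> (\<forall>x. 0 \<le> dl i x)
   \<and> (\<forall>x. 0 \<le> dt i x) \<and> (\<forall>x\<in>E. \<forall>u\<in>x. dl i x \<le> \<beta> * w u)"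
proof (induction i)
  case 0
  have dl0: "0 \<le> dl 0 x" for x
  proof (cases "x \<in> E")
    case True
    have "finite x" "x \<noteq> {}" using True fin_edge edges by auto
    moreover have "\<forall>v\<in>x. 0 \<le> w v / real (card (inc_edges E v))"
      using True edges wnn by (intro ballI divide_nonneg_nonneg) auto
    ultimately show ?thesis using True bpos by (simp add: init)
  qed (simp add: init)
  have b0: "dl 0 x \<le> \<beta> * w u" if "x \<in> E" "u \<in> x" for x u
  proof -
    have "finite x" using that fin_edge by auto
    hence "Min ((\<lambda>v. w v / real (card (inc_edges E v))) ` x) \<le> w u / real (card (inc_edges E u))"
      using that by (intro Min_le) auto
    also have "\<dots> \<le> w u"
    proof -
      have c1: "real (card (inc_edges E u)) \<ge> 1" using card_inc_pos[OF that] by simp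
      have "u \<in> V" using edges that by auto
      hence "w u \<ge> 0" using wnn by auto
      hence "w u / real (card (inc_edges E u)) \<le> w u / 1"
        using c1 by (intro divide_left_mono) auto
      thus ?thesis by simp
    qed
    finally show ?thesis using that bpos by (simp add: init)
  qed
  show ?case using dl0 b0 by (simp add: init)
next
  case (Suc i)
  hence IH: "Cv i \<subseteq> E" "\<And>x. x\<in>E \<Longrightarrow> x \<inter> Cs i \<noteq> {} \<Longrightarrow> x \<in> Cv i" "\<And>x. 0 \<le> dl i x"
     "\<And>x. 0 \<le> dt i x" "\<And>x u. x\<in>E \<Longrightarrow> u\<in>x \<Longrightarrow> dl i x \<le> \<beta> * w u" by auto
  have A: "Cv (Suc i) \<subseteq> E" using IH(1) by (auto simp: Cv_Suc)
  have B: "x \<in> Cv (Suc i)" if "x\<in>E" "x \<inter> Cs (Suc i) \<noteq> {}" for x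
    using that IH(2) by (auto simp: Cv_Suc Cs_Suc)
  have C: "0 \<le> dl (Suc i) x" for x using IH(3)[of x] agt by (simp add: dl_Suc)
  have D: "0 \<le> dt (Suc i) x" for x using IH(4)[of x] C[of x] by (simp add: dt_Suc)
  have F: "dl (Suc i) x \<le> \<beta> * w u" if "x\<in>E" "u\<in>x" for x u
  proof (cases "x \<in> E - Cv (Suc i) \<and> \<not> (\<exists>v\<in>x. stk i v)")
    case True
    hence ns: "\<not> stk i u" using that by auto
    have "u \<notin> Cs (Suc i)" using B[of x] that True by auto
    moreover have xin: "x \<in> inc_edges E u - Cv (Suc i)" using True that by (simp add: inc_edges_def)
    ultimately have le: "(\<Sum>e\<in>inc_edges E u - Cv (Suc i). dl i e) \<le> (\<beta> / \<alpha>) * w u"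
      using ns unfolding stk_def by auto
    have "dl i x \<le> (\<Sum>e\<in>inc_edges E u - Cv (Suc i). dl i e)"
      using xin fin_inc[of u] IH(3) by (intro member_le_sum) auto
    hence "\<alpha> * dl i x \<le> \<alpha> * ((\<beta> / \<alpha>) * w u)" using le agt
      by (intro mult_left_mono) auto
    thus ?thesis using True agt by (simp add: dl_Suc)
  next
    case False
    thus ?thesis using IH(5)[OF that] by (auto simp: dl_Suc)
  qed
  show ?case using A B C D F by blast
qed

lemma Cv_sub: "Cv i \<subseteq> E" using inv by blast
lemma Cv_cov: "x\<in>E \<Longrightarrow> x \<inter> Cs i \<noteq> {} \<Longrightarrow> x \<in> Cv i" using inv by blast
lemma dl_nn: "0 \<le> dl i x" using inv by blast
lemma dt_nn: "0 \<le> dt i x" using inv by blast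
lemma dl_bd: "x\<in>E \<Longrightarrow> u\<in>x \<Longrightarrow> dl i x \<le> \<beta> * w u" using inv by blast

lemma Cv_mono1: "Cv i \<subseteq> Cv (Suc i)" by (auto simp: Cv_Suc)
lemma Cv_mono: "i \<le> j \<Longrightarrow> Cv i \<subseteq> Cv j"
  using lift_Suc_mono_le[of Cv, OF Cv_mono1] by blast
lemma dl_mono1: "dl i x \<le> dl (Suc i) x"
  using dl_nn[of i x] agt mult_right_mono[of 1 \<alpha> "dl i x"] by (auto simp: dl_Suc)
lemma dt_mono1: "dt i x \<le> dt (Suc i) x"
  using dl_nn[of "Suc i" x] by (auto simp: dt_Suc)
lemma DD_mono1: "DD i v \<le> DD (Suc i) v"
  unfolding DD_def by (intro sum_mono dt_mono1)

lemma DD_Suc: "DD (Suc i) v = DD i v + (\<Sum>x\<in>inc_edges E v - Cv (Suc i). dl (Suc i) x)"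
proof -
  have "DD (Suc i) v = (\<Sum>x\<in>inc_edges E v. dt i x + (if x \<in> E - Cv (Suc i) then dl (Suc i) x else 0))"
    unfolding DD_def by (intro sum.cong) (auto simp: dt_Suc)
  also have "\<dots> = DD i v + (\<Sum>x\<in>inc_edges E v. (if x \<in> E - Cv (Suc i) then dl (Suc i) x else 0))"
    by (simp add: sum.distrib DD_def)
  also have "(\<Sum>x\<in>inc_edges E v. (if x \<in> E - Cv (Suc i) then dl (Suc i) x else 0))
     = (\<Sum>x\<in>inc_edges E v \<inter> (E - Cv (Suc i)). dl (Suc i) x)"
    using fin_inc by (simp add: sum.inter_restrict)
  also have "inc_edges E v \<inter> (E - Cv (Suc i)) = inc_edges E v - Cv (Suc i)"
    by (auto simp: inc_edges_def)
  finally show ?thesis .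
qed

lemma dl_pos: assumes e: "e \<in> E" and wp: "\<forall>v\<in>e. 0 < w v" shows "0 < dl i e"
proof (induction i)
  case 0
  have "finite e" "e \<noteq> {}" using e fin_edge edges by auto
  moreover have "\<forall>v\<in>e. 0 < w v / real (card (inc_edges E v))"
    using wp card_inc_pos[OF e] by (intro ballI divide_pos_pos) (auto, fastforce)
  ultimately show ?case using e bpos by (simp add: init)
next
  case (Suc i) thus ?case using dl_mono1[of i e] by linarith
qed

definition Phi where "Phi e i = ln (dl i e) / ln \<alpha> + (\<Sum>v\<in>e. \<alpha> * DD i v / (\<beta> * w v))"

lemma term_mono: "0 < w v \<Longrightarrow> \<alpha> * DD i v / (\<beta> * w v) \<le> \<alpha> * DD (Suc i) v / (\<beta> * w v)"
  using DD_mono1[of i v] agt bpos by (intro divide_right_mono mult_left_mono) auto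

lemma phi_step: assumes e: "e \<in> E" and wp: "\<forall>v\<in>e. 0 < w v" and nc: "e \<notin> Cv (Suc i)"
  shows "Phi e i + 1 \<le> Phi e (Suc i)"
proof -
  have fe: "finite e" using e fin_edge by auto
  have la: "ln \<alpha> > 0" using agt by simp
  show ?thesis
  proof (cases "\<exists>v\<in>e. stk i v")
    case True
    then obtain v0 where v0: "v0 \<in> e" "stk i v0" by auto
    have dle: "dl (Suc i) e = dl i e" using True e nc by (simp add: dl_Suc)
    have "(\<beta> / \<alpha>) * w v0 < (\<Sum>x\<in>inc_edges E v0 - Cv (Suc i). dl i x)"
      using v0 unfolding stk_def by auto
    also have "\<dots> \<le> (\<Sum>x\<in>inc_edges E v0 - Cv (Suc i). dl (Suc i) x)"
      by (intro sum_mono dl_mono1)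
    finally have "DD i v0 + (\<beta> / \<alpha>) * w v0 < DD (Suc i) v0" by (simp add: DD_Suc)
    hence "\<alpha> * (DD i v0 + (\<beta> / \<alpha>) * w v0) / (\<beta> * w v0) < \<alpha> * DD (Suc i) v0 / (\<beta> * w v0)"
      using agt bpos wp v0 by (intro divide_strict_right_mono mult_strict_left_mono) auto
    moreover have "\<alpha> * (DD i v0 + (\<beta> / \<alpha>) * w v0) / (\<beta> * w v0) = \<alpha> * DD i v0 / (\<beta> * w v0) + 1"
    proof -
      have "w v0 \<noteq> 0" "\<beta> \<noteq> 0" "\<alpha> \<noteq> 0" using agt bpos wp v0 by auto
      thus ?thesis by (simp add: field_simps)
    qed
    ultimately have t0: "\<alpha> * DD i v0 / (\<beta> * w v0) + 1 < \<alpha> * DD (Suc i) v0 / (\<beta> * w v0)" by simp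
    have rest: "(\<Sum>v\<in>e - {v0}. \<alpha> * DD i v / (\<beta> * w v)) \<le> (\<Sum>v\<in>e - {v0}. \<alpha> * DD (Suc i) v / (\<beta> * w v))"
      using wp by (intro sum_mono term_mono) auto
    have "(\<Sum>v\<in>e. \<alpha> * DD i v / (\<beta> * w v)) + 1 \<le> (\<Sum>v\<in>e. \<alpha> * DD (Suc i) v / (\<beta> * w v))"
      using t0 rest sum.remove[OF fe v0(1), of "\<lambda>v. \<alpha> * DD i v / (\<beta> * w v)"]
        sum.remove[OF fe v0(1), of "\<lambda>v. \<alpha> * DD (Suc i) v / (\<beta> * w v)"] by linarith
    thus ?thesis unfolding Phi_def dle by linarith
  next
    case False
    have dle: "dl (Suc i) e = \<alpha> * dl i e" using False e nc by (simp add: dl_Suc)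
    have "ln (dl (Suc i) e) = ln \<alpha> + ln (dl i e)"
      unfolding dle using agt dl_pos[OF e wp, of i] by (simp add: ln_mult)
    hence l: "ln (dl (Suc i) e) / ln \<alpha> = 1 + ln (dl i e) / ln \<alpha>" using la by (simp add: field_simps)
    have "(\<Sum>v\<in>e. \<alpha> * DD i v / (\<beta> * w v)) \<le> (\<Sum>v\<in>e. \<alpha> * DD (Suc i) v / (\<beta> * w v))"
      using wp by (intro sum_mono term_mono) auto
    thus ?thesis unfolding Phi_def l by linarith
  qed
qed

lemma phi_lower: assumes e: "e \<in> E" and wp: "\<forall>v\<in>e. 0 < w v"
  shows "e \<notin> Cv i \<Longrightarrow> Phi e 0 + real i \<le> Phi e i"
proof (induction i)
  case 0 thus ?case by simp
next
  case (Suc i)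
  hence "e \<notin> Cv i" using Cv_mono1[of i] by auto
  thus ?case using Suc phi_step[OF e wp Suc(2)] by simp
qed

lemma final_bound:
  assumes e: "e \<in> E" and nc: "e \<notin> Cv (Suc i)" and dg: "\<forall>u\<in>V. real (card (inc_edges E u)) \<le> \<Delta>"
  shows "real i < ln \<Delta> / ln \<alpha> + real (card e) * (\<alpha> * (1 - \<beta>) / \<beta>)"
proof -
  have fe: "finite e" and ne: "e \<noteq> {}" and eV: "e \<subseteq> V" using e fin_edge edges by auto
  have la: "ln \<alpha> > 0" using agt by simp
  have Dlt: "DD i v < (1 - \<beta>) * w v" if v: "v \<in> e" for v
  proof (rule ccontr)
    assume "\<not> ?thesis"
    hence ge: "(1 - \<beta>) * w v \<le> DD i v" by simp
    have "v \<notin> Cs i" using Cv_cov[OF e, of i] Cv_mono1[of i] nc v by auto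
    moreover have "e \<in> inc_edges E v - Cv i" using Cv_mono1[of i] nc v e by (auto simp: inc_edges_def)
    ultimately have "v \<in> JJ i" using ge v eV unfolding JJ_def DD_def by auto
    hence "e \<in> Cv (Suc i)" using e v by (auto simp: Cv_Suc)
    thus False using nc by simp
  qed
  have wp: "\<forall>v\<in>e. 0 < w v"
  proof
    fix v assume v: "v \<in> e"
    have "0 \<le> DD i v" unfolding DD_def by (intro sum_nonneg dt_nn)
    hence "0 < (1 - \<beta>) * w v" using Dlt[OF v] by linarith
    thus "0 < w v" using blt by (simp add: zero_less_mult_iff)
  qed
  have nci: "e \<notin> Cv i" using nc Cv_mono1[of i] by auto
  have low: "Phi e 0 + real i \<le> Phi e i" using phi_lower[OF e wp nci] .
  have "(\<Sum>v\<in>e. \<alpha> * DD i v / (\<beta> * w v)) < (\<Sum>v\<in>e. \<alpha> * (1 - \<beta>) / \<beta>)"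
  proof (rule sum_strict_mono[OF fe ne])
    fix v assume v: "v \<in> e"
    have "\<alpha> * DD i v / (\<beta> * w v) < \<alpha> * ((1 - \<beta>) * w v) / (\<beta> * w v)"
      using Dlt[OF v] agt bpos wp v by (intro divide_strict_right_mono mult_strict_left_mono) auto
    also have "\<dots> = \<alpha> * (1 - \<beta>) / \<beta>"
    proof -
      have "w v \<noteq> 0" "\<beta> \<noteq> 0" using bpos wp v by auto
      thus ?thesis by (simp add: field_simps)
    qed
    finally show "\<alpha> * DD i v / (\<beta> * w v) < \<alpha> * (1 - \<beta>) / \<beta>" .
  qed
  hence s1: "(\<Sum>v\<in>e. \<alpha> * DD i v / (\<beta> * w v)) < real (card e) * (\<alpha> * (1 - \<beta>) / \<beta>)" by simp
  have s0: "0 \<le> (\<Sum>v\<in>e. \<alpha> * DD 0 v / (\<beta> * w v))"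
  proof (intro sum_nonneg)
    fix v assume v: "v \<in> e"
    have "0 \<le> DD 0 v" unfolding DD_def by (intro sum_nonneg dt_nn)
    thus "0 \<le> \<alpha> * DD 0 v / (\<beta> * w v)" using agt bpos wp v
      by (intro divide_nonneg_pos mult_nonneg_nonneg mult_pos_pos) auto
  qed
  have "finite ((\<lambda>v. w v / real (card (inc_edges E v))) ` e)" using fe by simp
  hence "Min ((\<lambda>v. w v / real (card (inc_edges E v))) ` e) \<in> (\<lambda>v. w v / real (card (inc_edges E v))) ` e"
    using ne by (intro Min_in) auto
  then obtain u0 where u0: "u0 \<in> e" "Min ((\<lambda>v. w v / real (card (inc_edges E v))) ` e) = w u0 / real (card (inc_edges E u0))"
    by auto
  have d0: "dl 0 e = \<beta> * (w u0 / real (card (inc_edges E u0)))" using u0 e by (simp add: init)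
  have c1: "real (card (inc_edges E u0)) \<ge> 1" using card_inc_pos[OF e u0(1)] by simp
  have "dl i e \<le> \<beta> * w u0" using dl_bd[OF e u0(1)] .
  also have "\<dots> = real (card (inc_edges E u0)) * dl 0 e" unfolding d0 using c1 by simp
  also have "\<dots> \<le> \<Delta> * dl 0 e"
    using dg u0 eV dl_nn[of 0 e] by (intro mult_right_mono) auto
  finally have dle: "dl i e \<le> \<Delta> * dl 0 e" .
  have p0: "0 < dl 0 e" "0 < dl i e" using dl_pos[OF e wp] by auto
  have Dp: "\<Delta> > 0" using dle p0 by (smt (verit) mult_nonpos_nonneg)
  have "ln (dl i e) \<le> ln (\<Delta> * dl 0 e)" using dle p0 Dp by simp
  also have "\<dots> = ln \<Delta> + ln (dl 0 e)" using Dp p0 by (simp add: ln_mult)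
  finally have "ln (dl i e) / ln \<alpha> \<le> (ln \<Delta> + ln (dl 0 e)) / ln \<alpha>"
    using la by (simp add: divide_right_mono)
  hence "ln (dl i e) / ln \<alpha> \<le> ln \<Delta> / ln \<alpha> + ln (dl 0 e) / ln \<alpha>" by (simp add: add_divide_distrib)
  thus ?thesis using low s1 s0 unfolding Phi_def by linarith
qed

lemma done_lemma:
  assumes dg: "\<forall>u\<in>V. real (card (inc_edges E u)) \<le> \<Delta>" and cf: "\<forall>e\<in>E. real (card e) \<le> F"
    and B: "ln \<Delta> / ln \<alpha> + F * (\<alpha> * (1 - \<beta>) / \<beta>) \<le> real i"
  shows "mwhvc_done_by V E w \<beta> \<alpha> (Suc i)"
proof -
  have K: "0 \<le> \<alpha> * (1 - \<beta>) / \<beta>" using agt bpos blt by simp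
  have "E \<subseteq> Cv (Suc i)"
  proof
    fix e assume e: "e \<in> E"
    show "e \<in> Cv (Suc i)"
    proof (rule ccontr)
      assume "e \<notin> Cv (Suc i)"
      from final_bound[OF e this dg] have "real i < ln \<Delta> / ln \<alpha> + real (card e) * (\<alpha> * (1 - \<beta>) / \<beta>)" .
      moreover have "real (card e) * (\<alpha> * (1 - \<beta>) / \<beta>) \<le> F * (\<alpha> * (1 - \<beta>) / \<beta>)"
        using cf e K by (intro mult_right_mono) auto
      ultimately show False using B by linarith
    qed
  qed
  hence "Cv (Suc i) = E" using Cv_sub by blast
  thus ?thesis by (simp add: mwhvc_done_by_def Cv_def)
qed

end


lemma ln_le_half: assumes "0 < (x::real)" shows "ln x \<le> x / 2"
proof -
  have s: "sqrt x > 0" using assms by simp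
  have "ln x = 2 * ln (sqrt x)" using assms by (simp add: ln_sqrt)
  also have "\<dots> \<le> 2 * (sqrt x - 1)" using ln_le_minus_one[OF s] by simp
  also have "\<dots> \<le> x / 2"
  proof -
    have "0 \<le> (sqrt x - 2)^2" by simp
    also have "(sqrt x - 2)^2 = x - 4 * sqrt x + 4" using assms by (simp add: power2_eq_square algebra_simps)
    finally show ?thesis by simp
  qed
  finally show ?thesis .
qed

theorem mainTheorem7:
  shows "\<exists>c::real. c > 0 \<and>
    (\<forall>(V::nat set) (E::nat set set) (w::nat \<Rightarrow> real) (f::nat) (\<epsilon>::real).
       finite V \<and> (\<forall>e\<in>E. e \<noteq> {} \<and> e \<subseteq> V \<and> card e \<le> f) \<and>
       max_degree V E \<ge> 3 \<and> (\<forall>v\<in>V. w v \<ge> 0) \<and> 0 < \<epsilon> \<and> \<epsilon> \<le> 1 \<longrightarrow>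
       (let \<Delta> = real (max_degree V E);
            \<beta> = \<epsilon> / (real f + \<epsilon>);
            \<alpha> = ln \<Delta> / ln (ln \<Delta>)
        in \<exists>T::nat. mwhvc_done_by V E w \<beta> \<alpha> T \<and>
                    real T \<le> c * (real f ^ 2 / \<epsilon>) * (ln \<Delta> / ln (ln \<Delta>))))"
proof (rule exI[of _ 4], intro conjI allI impI)
  show "(0::real) < 4" by simp
  fix V :: "nat set" and E :: "nat set set" and w :: "nat \<Rightarrow> real" and f :: nat and \<epsilon> :: real
  assume H: "finite V \<and> (\<forall>e\<in>E. e \<noteq> {} \<and> e \<subseteq> V \<and> card e \<le> f) \<and>
       max_degree V E \<ge> 3 \<and> (\<forall>v\<in>V. w v \<ge> 0) \<and> 0 < \<epsilon> \<and> \<epsilon> \<le> 1"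
  hence finV: "finite V" and ed: "\<forall>e\<in>E. e \<noteq> {} \<and> e \<subseteq> V \<and> card e \<le> f"
    and md: "max_degree V E \<ge> 3" and wnn: "\<forall>v\<in>V. w v \<ge> 0" and ep: "0 < \<epsilon>" "\<epsilon> \<le> 1" by auto
  define \<Delta> where "\<Delta> = real (max_degree V E)"
  define \<beta> where "\<beta> = \<epsilon> / (real f + \<epsilon>)"
  define \<alpha> where "\<alpha> = ln \<Delta> / ln (ln \<Delta>)"
  have D3: "\<Delta> \<ge> 3" using md by (simp add: \<Delta>_def)
  define x where "x = ln \<Delta>"
  define y where "y = ln x"
  have x1: "x > 1" unfolding x_def using D3 ln3_gt_1
    by (smt (verit) ln_le_cancel_iff)
  have y0: "y > 0" unfolding y_def using x1 by simp
  have yx: "y \<le> x / 2" unfolding y_def using ln_le_half x1 by simp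
  have ad: "\<alpha> = x / y" by (simp add: \<alpha>_def x_def y_def)
  have a2: "\<alpha> \<ge> 2" unfolding ad using yx y0 by (simp add: field_simps)
  have lny: "ln y \<le> y / 2" using ln_le_half y0 by simp
  have la: "ln \<alpha> = y - ln y" unfolding ad using x1 y0 by (simp add: ln_div y_def)
  have lapos: "ln \<alpha> > 0" using a2 by simp
  have lDa: "ln \<Delta> / ln \<alpha> \<le> 2 * \<alpha>"
  proof -
    have "y / 2 \<le> ln \<alpha>" using la lny by simp
    hence "x / ln \<alpha> \<le> x / (y / 2)" using x1 y0 by (intro divide_left_mono) auto
    thus ?thesis unfolding ad x_def[symmetric] by (simp add: mult.commute)
  qed
  have rhs_nn: "0 \<le> 4 * (real f ^ 2 / \<epsilon>) * \<alpha>" using a2 ep by simp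
  have "\<exists>T::nat. mwhvc_done_by V E w \<beta> \<alpha> T \<and> real T \<le> 4 * (real f ^ 2 / \<epsilon>) * \<alpha>"
  proof (cases "E = {}")
    case True
    have "mwhvc_done_by V E w \<beta> \<alpha> 0"
      using True by (simp add: mwhvc_done_by_def mwhvc_state_at_def mwhvc_init_def Let_def)
    thus ?thesis using rhs_nn by (intro exI[of _ 0]) simp
  next
    case False
    then obtain e0 where e0: "e0 \<in> E" by auto
    have "finite e0" using ed e0 finV finite_subset by blast
    hence "card e0 \<ge> 1" using ed e0 by (simp add: Suc_le_eq card_gt_0_iff)
    hence f1: "real f \<ge> 1" using ed e0 by (metis le_trans of_nat_1 of_nat_le_iff)
    have bp: "0 < \<beta>" "\<beta> < 1" using ep f1 by (auto simp: \<beta>_def field_simps)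
    have K: "(1 - \<beta>) / \<beta> = real f / \<epsilon>"
    proof -
      have nz: "real f + \<epsilon> \<noteq> 0" "\<epsilon> \<noteq> 0" using ep f1 by auto
      have "1 - \<beta> = real f / (real f + \<epsilon>)" using nz by (simp add: \<beta>_def field_simps)
      thus ?thesis using nz by (simp add: \<beta>_def)
    qed
    have dg: "\<forall>u\<in>V. real (card (inc_edges E u)) \<le> \<Delta>"
      using finV by (auto simp: \<Delta>_def max_degree_def intro!: Max_ge)
    have cf: "\<forall>e\<in>E. real (card e) \<le> real f" using ed by auto
    define B where "B = ln \<Delta> / ln \<alpha> + real f * (\<alpha> * (1 - \<beta>) / \<beta>)"
    have B': "B = ln \<Delta> / ln \<alpha> + real f ^ 2 / \<epsilon> * \<alpha>"
    proof -
      have "real f * (\<alpha> * (1 - \<beta>) / \<beta>) = real f * \<alpha> * ((1 - \<beta>) / \<beta>)" by simp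
      also have "\<dots> = real f ^ 2 / \<epsilon> * \<alpha>" unfolding K by (simp add: power2_eq_square)
      finally show ?thesis unfolding B_def by simp
    qed
    have B0: "0 \<le> B" using lapos D3 a2 ep unfolding B' by simp
    define i where "i = nat \<lceil>B\<rceil>"
    have Bi: "B \<le> real i" unfolding i_def by linarith
    have Ti: "real (Suc i) \<le> B + 2" unfolding i_def using B0 by linarith
    have fin_done: "mwhvc_done_by V E w \<beta> \<alpha> (Suc i)"
      using done_lemma[OF finV _ wnn bp(1) bp(2) _ dg cf] ed a2 Bi unfolding B_def by auto
    have ff: "real f ^ 2 / \<epsilon> \<ge> 1"
    proof -
      have "real f ^ 2 \<ge> 1" using f1 by (simp add: one_le_power)
      thus ?thesis using ep by (simp add: field_simps)
    qed
    have "B + 2 \<le> 3 * \<alpha> + real f ^ 2 / \<epsilon> * \<alpha>" unfolding B' using lDa a2 by linarith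
    also have "\<dots> \<le> 4 * (real f ^ 2 / \<epsilon>) * \<alpha>"
    proof -
      have "\<alpha> \<le> real f ^ 2 / \<epsilon> * \<alpha>" using ff a2 mult_right_mono[of 1 "real f ^ 2 / \<epsilon>" \<alpha>] by simp
      moreover have "4 * (real f ^ 2 / \<epsilon>) * \<alpha> = 4 * (real f ^ 2 / \<epsilon> * \<alpha>)" by simp
      moreover have "\<And>X::real. \<alpha> \<le> X \<Longrightarrow> 3 * \<alpha> + X \<le> 4 * X" by simp
      ultimately show ?thesis by metis
    qed
    finally show ?thesis using fin_done Ti by (intro exI[of _ "Suc i"]) simp
  qed
  thus "let \<Delta> = real (max_degree V E);
            \<beta> = \<epsilon> / (real f + \<epsilon>);
            \<alpha> = ln \<Delta> / ln (ln \<Delta>)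
        in \<exists>T::nat. mwhvc_done_by V E w \<beta> \<alpha> T \<and>
                    real T \<le> 4 * (real f ^ 2 / \<epsilon>) * (ln \<Delta> / ln (ln \<Delta>))"
    unfolding Let_def \<alpha>_def \<beta>_def \<Delta>_def by (simp add: mult.assoc)
qed

end
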